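(* Consider the coupled vapour/liquid heat equations on fixed (transformed) domains \[ \beta_v\big((J_v T_v)_\tau + (a_v T_v)_\xi\big) = k_v\big(J_v^{-1} T_{v,\xi}\big)_\xi,\quad \xi\in\Omega_v=[\xi_0,\delta],\qquad \beta_l\big((J_l T_l)_\tau + (a_l T_l)_\eta\big) = k_l\big(J_l^{-1} T_{l,\eta}\big)_\eta,\quad \eta\in\Omega_l=[\delta,\eta_n], \] with the interface conditions imposed strongly, $T_v = T_l = T_\delta$ at the interface $\xi=\eta=\delta$, where the transformed wave speeds are $a_v = u_v - x_\tau$, $a_l = u_l - x_\tau$, the interface (mesh) velocity $\tilde u_\delta = x_\tau$ at the interface satisfies \[ \rho_v h_{lv}\,\tilde u_\delta = \big[k_l J_l^{-1} T_{l,\eta} - k_v J_v^{-1} T_{v,\xi}\big]_\delta , \] and the interface mass relation $(u_l)_\delta = \gamma (u_v)_\delta + (1-\gamma)\tilde u_\delta$, $\gamma=\rho_v/\rho_l$, holds, so that $(a_v)_\delta = (u_v)_\delta - \tilde u_\delta$ and $(a_l)_\delta = \gamma (a_v)_\delta$. Then, ignoring outer boundary contributions, this strong interface treatment is dissipative and energy bounded if $(a_v)_\delta<0$ and $\tilde u_\delta \ge 0$, and it is energy bounded otherwise.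
   Context: Physical setting: a one-dimensional two-phase (vapour $v$, liquid $l$) evaporation problem with a moving evaporation interface $x_\delta(t)$, originally $\beta_v((T_v)_t + u_v (T_v)_x) = k_v (T_v)_{xx}$ on $[x_0,x_\delta]$ and $\beta_l((T_l)_t + u_l (T_l)_x) = k_l (T_l)_{xx}$ on $[x_\delta,x_n]$, with $T_v=T_l=T_\delta$ at $x_\delta(t)$. Here $T$ is temperature, $\rho$ density, $C_p$ specific heat at constant pressure, $k>0$ the scaled heat conduction coefficient, $\beta=\rho C_p>0$; the given evaporation temperature $T_\delta>0$ and latent heat $h_{lv}>0$ are external data; the velocities $u_v,u_l$ are positive. The problem is mapped to fixed domains by time-dependent coordinate transformations $x=x(\xi,\tau)$ (vapour), $x=x(\eta,\tau)$ (liquid), $t=\tau$, with Jacobians $J_v,J_l>0$ satisfying $J_v\xi_x=1$, $J_v\xi_t=-x_\tau$, $(J_v)_\tau+(J_v\xi_t)_\xi=0$ and analogously $J_l\eta_x=1$, $J_l\eta_t=-x_\tau$, $(J_l)_\tau+(J_l\eta_t)_\eta=0$. The paper asserts that $C_0=(\beta_l\gamma-\beta_v)T_\delta^2=\rho_v[(C_p)_l-(C_p)_v]T_\delta^2>0$ and $C_1=2T_\delta\rho_v h_{lv}>0$. The energy is $E(\tau)=\beta_v\int_{\xi_0}^{\delta}T_v^2J_v\,d\xi+\beta_l\int_\delta^{\eta_n}T_l^2J_l\,d\eta$; "energy bounded" means (with outer-boundary terms ignored) that $E$ at any time is bounded by its initial value plus the time integral of interface terms that are bounded in terms of the given data (using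 e.g. that $\int_0^t\tilde u_\delta\,d\tau = x_\delta(t)-x_\delta(0)$ is bounded by the domain size); "dissipative" means the interface terms in the energy rate $\frac{dE}{d\tau}+2k_v\int J_v^{-1}T_{v,\xi}^2d\xi+2k_l\int J_l^{-1}T_{l,\eta}^2d\eta$ are non-positive. *)

theory Defs
  imports "HOL-Analysis.Analysis"
begin

definition pdx :: "(real \<Rightarrow> real \<Rightarrow> real) \<Rightarrow> real \<Rightarrow> real \<Rightarrow> real" where
  "pdx f x t = deriv (\<lambda>s. f s t) x"

definition pdt :: "(real \<Rightarrow> real \<Rightarrow> real) \<Rightarrow> real \<Rightarrow> real \<Rightarrow> real" where
  "pdt f x t = deriv (\<lambda>s. f x s) t"

definition C1_plane :: "(real \<Rightarrow> real \<Rightarrow> real) \<Rightarrow> bool" where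
  "C1_plane f \<longleftrightarrow>
     (\<forall>x t. (\<lambda>s. f s t) differentiable (at x) \<and> (\<lambda>s. f x s) differentiable (at t)) \<and>
     continuous_on UNIV (\<lambda>p. f (fst p) (snd p)) \<and>
     continuous_on UNIV (\<lambda>p. pdx f (fst p) (snd p)) \<and>
     continuous_on UNIV (\<lambda>p. pdt f (fst p) (snd p))"

definition C2_plane :: "(real \<Rightarrow> real \<Rightarrow> real) \<Rightarrow> bool" where
  "C2_plane f \<longleftrightarrow> C1_plane f \<and> C1_plane (pdx f) \<and> C1_plane (pdt f)"

end

theory Submission
  imports Defs
begin


lemma C1_dx: "C1_plane f \<Longrightarrow> ((\<lambda>s. f s t) has_real_derivative pdx f x t) (at x)"
  unfolding C1_plane_def pdx_def by (simp add: DERIV_deriv_iff_real_differentiable)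

lemma C1_dt: "C1_plane f \<Longrightarrow> ((\<lambda>s. f x s) has_real_derivative pdt f x t) (at t)"
  unfolding C1_plane_def pdt_def by (simp add: DERIV_deriv_iff_real_differentiable)

lemma cont2:
  assumes "continuous_on UNIV (\<lambda>p. F (fst p) (snd p))" "continuous_on S g" "continuous_on S h"
  shows "continuous_on S (\<lambda>y. F (g y) (h y))"
proof -
  have "continuous_on S (\<lambda>y. (g y, h y))" using assms by (intro continuous_on_Pair)
  from continuous_on_compose2[OF assms(1) this] show ?thesis by simp
qed

lemma C1_cont: "C1_plane f \<Longrightarrow> continuous_on S g \<Longrightarrow> continuous_on S h \<Longrightarrow> continuous_on S (\<lambda>y. f (g y) (h y))"
  unfolding C1_plane_def using cont2 by blast
lemma C1_cont_x: "C1_plane f \<Longrightarrow> continuous_on S g \<Longrightarrow> continuous_on S h \<Longrightarrow> continuous_on S (\<lambda>y. pdx f (g y) (h y))"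
  unfolding C1_plane_def using cont2 by blast
lemma C1_cont_t: "C1_plane f \<Longrightarrow> continuous_on S g \<Longrightarrow> continuous_on S h \<Longrightarrow> continuous_on S (\<lambda>y. pdt f (g y) (h y))"
  unfolding C1_plane_def using cont2 by blast

lemma ftc_real:
  assumes "a \<le> b" "\<And>x. x \<in> {a..b} \<Longrightarrow> (F has_real_derivative f x) (at x)"
  shows "integral {a..b} f = F b - F a"
proof -
  have "(f has_integral (F b - F a)) {a..b}"
    by (rule fundamental_theorem_of_calculus[OF assms(1)])
       (use assms(2) in \<open>auto simp: has_real_derivative_iff_has_vector_derivative[symmetric] intro: has_field_derivative_at_within\<close>)
  then show ?thesis by (rule integral_unique)
qed

lemma mixed:
  assumes "C2_plane f"
  shows "pdt (pdx f) x0 t0 = pdx (pdt f) x0 t0"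
proof -
  have f1: "C1_plane f" and fx1: "C1_plane (pdx f)" and ft1: "C1_plane (pdt f)"
    using assms unfolding C2_plane_def by auto
  define a where "a = x0 - 1"
  define b where "b = x0 + 1"
  have ab: "a < x0" "x0 < b" by (auto simp: a_def b_def)
  have A: "integral {a..x} (\<lambda>s. pdt (pdx f) s t0) = pdt f x t0 - pdt f a t0" if x: "x \<in> {a..b}" for x
  proof -
    have ax: "a \<le> x" using x by auto
    have I: "integral {a..x} (\<lambda>s. pdx f s t) = f x t - f a t" for t
      by (rule ftc_real[OF ax]) (rule C1_dx[OF f1])
    have L: "((\<lambda>t. integral (cbox a x) (\<lambda>s. pdx f s t)) has_field_derivative
               integral (cbox a x) (\<lambda>s. pdt (pdx f) s t0)) (at t0 within UNIV)"
    proof (rule leibniz_rule_field_derivative)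
      show "((\<lambda>t. pdx f s t) has_field_derivative pdt (pdx f) s t) (at t within UNIV)" for s t
        using C1_dt[OF fx1] by simp
      show "(\<lambda>s. pdx f s t) integrable_on cbox a x" for t
        unfolding cbox_interval
        by (rule integrable_continuous_interval, rule C1_cont[OF fx1]) (auto intro: continuous_intros)
      show "continuous_on (UNIV \<times> cbox a x) (\<lambda>(t, s). pdt (pdx f) s t)"
        unfolding case_prod_unfold
        by (rule C1_cont_t[OF fx1]) (auto intro: continuous_intros)
    qed auto
    then have L': "((\<lambda>t. f x t - f a t) has_real_derivative integral {a..x} (\<lambda>s. pdt (pdx f) s t0)) (at t0)"
      using I by (simp add: cbox_interval)
    have "((\<lambda>t. f x t - f a t) has_real_derivative pdt f x t0 - pdt f a t0) (at t0)"
      by (intro DERIV_diff C1_dt[OF f1])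
    with L' show ?thesis by (rule DERIV_unique)
  qed
  have B: "integral {a..x} (\<lambda>s. pdx (pdt f) s t0) = pdt f x t0 - pdt f a t0" if x: "x \<in> {a..b}" for x
    by (rule ftc_real) (use x in auto, rule C1_dx[OF ft1])
  have c1: "continuous_on {a..b} (\<lambda>s. pdt (pdx f) s t0)"
    by (rule C1_cont_t[OF fx1]) (auto intro: continuous_intros)
  have c2: "continuous_on {a..b} (\<lambda>s. pdx (pdt f) s t0)"
    by (rule C1_cont_x[OF ft1]) (auto intro: continuous_intros)
  have x0: "x0 \<in> {a..b}" using ab by auto
  have d1: "((\<lambda>x. integral {a..x} (\<lambda>s. pdt (pdx f) s t0)) has_real_derivative pdt (pdx f) x0 t0) (at x0 within {a..b})"
    by (rule integral_has_real_derivative[OF c1 x0])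
  have d2: "((\<lambda>x. integral {a..x} (\<lambda>s. pdx (pdt f) s t0)) has_real_derivative pdx (pdt f) x0 t0) (at x0 within {a..b})"
    by (rule integral_has_real_derivative[OF c2 x0])
  have d1': "((\<lambda>x. integral {a..x} (\<lambda>s. pdx (pdt f) s t0)) has_real_derivative pdt (pdx f) x0 t0) (at x0 within {a..b})"
    by (rule has_field_derivative_transform_within[OF d1 zero_less_one x0]) (simp add: A B)
  show ?thesis
    using DERIV_unique[OF d1'[unfolded at_within_Icc_at[OF ab]] d2[unfolded at_within_Icc_at[OF ab]]] .
qed


lemma one_phase:
  fixes x T :: "real \<Rightarrow> real \<Rightarrow> real" and u :: "real \<Rightarrow> real"
  assumes sx: "C2_plane x" and sT: "C2_plane T" and pq: "p \<le> q"
    and Jp: "\<forall>\<xi>\<in>{p..q}. 0 < pdx x \<xi> \<tau>"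
    and pde: "\<forall>\<xi>\<in>{p..q}. \<beta> * (pdt (\<lambda>x' t. pdx x x' t * T x' t) \<xi> \<tau> + pdx (\<lambda>x' t. (u t - pdt x x' t) * T x' t) \<xi> \<tau>)
                 = k * pdx (\<lambda>x' t. pdx T x' t / pdx x x' t) \<xi> \<tau>"
  shows "((\<lambda>\<tau>. \<beta> * integral {p..q} (\<lambda>\<xi>. (T \<xi> \<tau>)\<^sup>2 * pdx x \<xi> \<tau>)) has_real_derivative
     ((- \<beta> * (u \<tau> - pdt x q \<tau>) * (T q \<tau>)\<^sup>2 + 2 * k * T q \<tau> * (pdx T q \<tau> / pdx x q \<tau>))
      - (- \<beta> * (u \<tau> - pdt x p \<tau>) * (T p \<tau>)\<^sup>2 + 2 * k * T p \<tau> * (pdx T p \<tau> / pdx x p \<tau>))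
      - 2 * k * integral {p..q} (\<lambda>\<xi>. (pdx T \<xi> \<tau>)\<^sup>2 / pdx x \<xi> \<tau>))) (at \<tau>)"
proof -
  have x1: "C1_plane x" and xx: "C1_plane (pdx x)" and xt: "C1_plane (pdt x)"
    and T1: "C1_plane T" and Tx: "C1_plane (pdx T)" and Tt: "C1_plane (pdt T)"
    using sx sT unfolding C2_plane_def by auto
  define g where "g = (\<lambda>\<xi>. 2 * T \<xi> \<tau> * pdt T \<xi> \<tau> * pdx x \<xi> \<tau> + (T \<xi> \<tau>)\<^sup>2 * pdt (pdx x) \<xi> \<tau>)"
  have L: "((\<lambda>t. integral (cbox p q) (\<lambda>\<xi>. (T \<xi> t)\<^sup>2 * pdx x \<xi> t)) has_field_derivative
               integral (cbox p q) g) (at \<tau> within UNIV)"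
    unfolding g_def
  proof (rule leibniz_rule_field_derivative)
    show "((\<lambda>t. (T s t)\<^sup>2 * pdx x s t) has_field_derivative 2 * T s t * pdt T s t * pdx x s t + (T s t)\<^sup>2 * pdt (pdx x) s t) (at t within UNIV)" for s t
      using C1_dt[OF T1, of s t] C1_dt[OF xx, of s t]
      by (auto intro!: derivative_eq_intros simp: power2_eq_square algebra_simps)
    show "(\<lambda>s. (T s t)\<^sup>2 * pdx x s t) integrable_on cbox p q" for t
      unfolding cbox_interval
      by (rule integrable_continuous_interval)
         (intro continuous_intros C1_cont[OF T1] C1_cont[OF xx])
    show "continuous_on (UNIV \<times> cbox p q) (\<lambda>(t, s). 2 * T s t * pdt T s t * pdx x s t + (T s t)\<^sup>2 * pdt (pdx x) s t)"
      unfolding case_prod_unfold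
      by (intro continuous_intros C1_cont[OF T1] C1_cont[OF xx] C1_cont_t[OF T1] C1_cont_t[OF xx])
  qed auto
  define V where "V = (\<lambda>s. pdx T s \<tau> / pdx x s \<tau>)"
  define h where "h = (\<lambda>\<xi>. - \<beta> * (u \<tau> - pdt x \<xi> \<tau>) * (T \<xi> \<tau>)\<^sup>2 + 2 * k * T \<xi> \<tau> * V \<xi>)"
  define G where "G = (\<lambda>\<xi>. (pdx T \<xi> \<tau>)\<^sup>2 / pdx x \<xi> \<tau>)"
  define hd where "hd = (\<lambda>\<xi>. - \<beta> * ((- pdx (pdt x) \<xi> \<tau>) * (T \<xi> \<tau>)\<^sup>2 + (u \<tau> - pdt x \<xi> \<tau>) * (2 * T \<xi> \<tau> * pdx T \<xi> \<tau>))
        + 2 * k * (pdx T \<xi> \<tau> * V \<xi> + T \<xi> \<tau> * pdx (\<lambda>x' t. pdx T x' t / pdx x x' t) \<xi> \<tau>))"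
  have hder: "(h has_real_derivative hd \<xi>) (at \<xi>)" if "\<xi> \<in> {p..q}" for \<xi>
  proof -
    have J0: "pdx x \<xi> \<tau> \<noteq> 0" using Jp that by force
    have "(\<lambda>s. pdx T s \<tau> / pdx x s \<tau>) differentiable (at \<xi>)"
      using C1_dx[OF Tx, of \<tau> \<xi>] C1_dx[OF xx, of \<tau> \<xi>] J0
      by (auto intro!: derivative_intros simp: real_differentiable_def)
    then have V: "(V has_real_derivative pdx (\<lambda>x' t. pdx T x' t / pdx x x' t) \<xi> \<tau>) (at \<xi>)"
      unfolding pdx_def V_def by (simp add: DERIV_deriv_iff_real_differentiable)
    show ?thesis unfolding h_def hd_def
      using V C1_dx[OF T1, of \<tau> \<xi>] C1_dx[OF xt, of \<tau> \<xi>] C1_dx[OF Tx, of \<tau> \<xi>]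
      by (auto intro!: derivative_eq_intros simp: power2_eq_square algebra_simps)
  qed
  have ptw: "\<beta> * g \<xi> = hd \<xi> - 2 * k * G \<xi>" if "\<xi> \<in> {p..q}" for \<xi>
  proof -
    have J0: "pdx x \<xi> \<tau> \<noteq> 0" using Jp that by force
    have e1: "pdt (\<lambda>x' t. pdx x x' t * T x' t) \<xi> \<tau> = pdt (pdx x) \<xi> \<tau> * T \<xi> \<tau> + pdx x \<xi> \<tau> * pdt T \<xi> \<tau>"
      unfolding pdt_def[of "\<lambda>x' t. pdx x x' t * T x' t"]
      by (rule DERIV_imp_deriv)
         (use C1_dt[OF T1, of \<xi> \<tau>] C1_dt[OF xx, of \<xi> \<tau>] in \<open>auto intro!: derivative_eq_intros\<close>)
    have e2: "pdx (\<lambda>x' t. (u t - pdt x x' t) * T x' t) \<xi> \<tau> = - pdx (pdt x) \<xi> \<tau> * T \<xi> \<tau> + (u \<tau> - pdt x \<xi> \<tau>) * pdx T \<xi> \<tau>"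
      unfolding pdx_def[of "\<lambda>x' t. (u t - pdt x x' t) * T x' t"]
      by (rule DERIV_imp_deriv)
         (use C1_dx[OF T1, of \<tau> \<xi>] C1_dx[OF xt, of \<tau> \<xi>] in \<open>auto intro!: derivative_eq_intros\<close>)
    have mx: "pdt (pdx x) \<xi> \<tau> = pdx (pdt x) \<xi> \<tau>" by (rule mixed[OF sx])
    define W where "W = pdx (\<lambda>x' t. pdx T x' t / pdx x x' t) \<xi> \<tau>"
    have P: "\<beta> * (pdt (pdx x) \<xi> \<tau> * T \<xi> \<tau> + pdx x \<xi> \<tau> * pdt T \<xi> \<tau> + (- pdx (pdt x) \<xi> \<tau> * T \<xi> \<tau> + (u \<tau> - pdt x \<xi> \<tau>) * pdx T \<xi> \<tau>))
        = k * W"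
      using pde[rule_format, OF that] unfolding e1 e2 W_def by (simp add: algebra_simps)
    have kW: "k * W = \<beta> * (pdx x \<xi> \<tau> * pdt T \<xi> \<tau> + (u \<tau> - pdt x \<xi> \<tau>) * pdx T \<xi> \<tau>)"
      using P mx by (simp add: algebra_simps)
    have "hd \<xi> = \<beta> * pdx (pdt x) \<xi> \<tau> * (T \<xi> \<tau>)\<^sup>2 - 2 * \<beta> * (u \<tau> - pdt x \<xi> \<tau>) * T \<xi> \<tau> * pdx T \<xi> \<tau>
        + 2 * k * G \<xi> + 2 * T \<xi> \<tau> * (k * W)"
      unfolding hd_def G_def V_def W_def by (simp add: algebra_simps power2_eq_square)
    also have "\<dots> = \<beta> * g \<xi> + 2 * k * G \<xi>"
      unfolding kW g_def mx by (simp add: algebra_simps power2_eq_square)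
    finally show ?thesis by simp
  qed
  have Gc: "continuous_on {p..q} G"
    unfolding G_def using Jp
    by (intro continuous_intros C1_cont_x[OF T1] C1_cont_x[OF x1]) auto
  have hi: "(hd has_integral (h q - h p)) {p..q}"
    by (rule fundamental_theorem_of_calculus[OF pq])
       (use hder in \<open>auto simp: has_real_derivative_iff_has_vector_derivative[symmetric] intro: has_field_derivative_at_within\<close>)
  have Gi: "(G has_integral integral {p..q} G) {p..q}"
    using integrable_continuous_interval[OF Gc] by (simp add: has_integral_integral)
  have "((\<lambda>\<xi>. hd \<xi> - 2 * k * G \<xi>) has_integral (h q - h p - 2 * k * integral {p..q} G)) {p..q}"
    by (intro has_integral_diff hi has_integral_mult_right Gi)
  then have "((\<lambda>\<xi>. \<beta> * g \<xi>) has_integral (h q - h p - 2 * k * integral {p..q} G)) {p..q}"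
    by (rule has_integral_eq[rotated]) (simp add: ptw)
  then have gi: "\<beta> * integral {p..q} g = h q - h p - 2 * k * integral {p..q} G"
    by (metis integral_unique integral_mult_right)
  have "((\<lambda>t. \<beta> * integral {p..q} (\<lambda>\<xi>. (T \<xi> t)\<^sup>2 * pdx x \<xi> t)) has_real_derivative \<beta> * integral {p..q} g) (at \<tau>)"
    using L unfolding cbox_interval by (auto intro!: DERIV_cmult)
  then show ?thesis unfolding gi h_def G_def V_def by simp
qed


lemma alg:
  fixes ul g uv ud rv hv kl ql kv qv bv bl Td X Y Iv Il :: real
  assumes h1: "ul = g*uv + (1-g)*ud" and h2: "rv*hv*ud = kl*ql - kv*qv"
  shows "(-bv*(uv-ud)*Td^2 + 2*kv*Td*qv) - X - 2*kv*Iv + (Y - (-bl*(ul-ud)*Td^2 + 2*kl*Td*ql) - 2*kl*Il)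
    = (bl*g - bv)*Td^2*(uv-ud) - 2*Td*rv*hv*ud + (-X + Y) - (2*kv*Iv + 2*kl*Il)"
proof -
  have "2*Td*rv*hv*ud = 2*Td*(rv*hv*ud)" by simp
  also have "\<dots> = 2*Td*(kl*ql - kv*qv)" using h2 by simp
  finally have e: "2*Td*rv*hv*ud = 2*Td*(kl*ql - kv*qv)" .
  show ?thesis unfolding e h1 by (simp add: algebra_simps)
qed

lemma int_nonneg': "(\<And>x. x \<in> S \<Longrightarrow> 0 \<le> f x) \<Longrightarrow> 0 \<le> integral S (f :: 'a::euclidean_space \<Rightarrow> real)"
  by (cases "f integrable_on S") (auto intro: integral_nonneg simp: not_integrable_integral)


theorem proposition1:
  fixes xi0 delta etan tf kv kl rhov rhol Cpv Cpl hlv Tdelta :: real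
    and betav betal gamma C0 C1 :: real
    and xv xl Tv Tl Jv Jl av al :: "real \<Rightarrow> real \<Rightarrow> real"
    and uv ul xdelta ud E D BO :: "real \<Rightarrow> real"
  assumes dom: "xi0 < delta" "delta < etan" "0 \<le> tf"
    and pos: "0 < kv" "0 < kl" "0 < rhov" "0 < rhol" "0 < Cpv" "0 < Cpl" "0 < hlv" "0 < Tdelta"
    and Cp: "Cpv < Cpl"
    and beta_def: "betav = rhov * Cpv" "betal = rhol * Cpl"
    and gamma_def: "gamma = rhov / rhol"
    and C_def: "C0 = (betal * gamma - betav) * Tdelta ^ 2" "C1 = 2 * Tdelta * rhov * hlv"
    and smooth: "C2_plane xv" "C2_plane xl" "C2_plane Tv" "C2_plane Tl" "continuous_on UNIV uv"
    and J_def: "Jv = pdx xv" "Jl = pdx xl"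
    and Jpos: "\<forall>xi\<in>{xi0..delta}. \<forall>tau\<in>{0..tf}. 0 < Jv xi tau"
              "\<forall>eta\<in>{delta..etan}. \<forall>tau\<in>{0..tf}. 0 < Jl eta tau"
    and a_def: "av = (\<lambda>xi tau. uv tau - pdt xv xi tau)" "al = (\<lambda>eta tau. ul tau - pdt xl eta tau)"
    and upos: "\<forall>tau\<in>{0..tf}. 0 < uv tau \<and> 0 < ul tau"
    and pde_v: "\<forall>xi\<in>{xi0..delta}. \<forall>tau\<in>{0..tf}.
        betav * (pdt (\<lambda>x t. Jv x t * Tv x t) xi tau + pdx (\<lambda>x t. av x t * Tv x t) xi tau)
        = kv * pdx (\<lambda>x t. pdx Tv x t / Jv x t) xi tau"
    and pde_l: "\<forall>eta\<in>{delta..etan}. \<forall>tau\<in>{0..tf}.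
        betal * (pdt (\<lambda>x t. Jl x t * Tl x t) eta tau + pdx (\<lambda>x t. al x t * Tl x t) eta tau)
        = kl * pdx (\<lambda>x t. pdx Tl x t / Jl x t) eta tau"
    and interface_pos: "xdelta = (\<lambda>tau. xv delta tau)" "\<forall>tau. xl delta tau = xv delta tau"
    and ud_def: "ud = (\<lambda>tau. pdt xv delta tau)"
    and interface_T: "\<forall>tau\<in>{0..tf}. Tv delta tau = Tdelta \<and> Tl delta tau = Tdelta"
    and stefan: "\<forall>tau\<in>{0..tf}.
        rhov * hlv * ud tau = kl * pdx Tl delta tau / Jl delta tau - kv * pdx Tv delta tau / Jv delta tau"
    and mass: "\<forall>tau\<in>{0..tf}. ul tau = gamma * uv tau + (1 - gamma) * ud tau"
    and E_def: "E = (\<lambda>tau. betav * integral {xi0..delta} (\<lambda>xi. (Tv xi tau)\<^sup>2 * Jv xi tau)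
                         + betal * integral {delta..etan} (\<lambda>eta. (Tl eta tau)\<^sup>2 * Jl eta tau))"
    and D_def: "D = (\<lambda>tau. 2 * kv * integral {xi0..delta} (\<lambda>xi. (pdx Tv xi tau)\<^sup>2 / Jv xi tau)
                         + 2 * kl * integral {delta..etan} (\<lambda>eta. (pdx Tl eta tau)\<^sup>2 / Jl eta tau))"
    and BO_def: "BO = (\<lambda>tau. (betav * av xi0 tau * (Tv xi0 tau)\<^sup>2
                               - 2 * kv * Tv xi0 tau * pdx Tv xi0 tau / Jv xi0 tau)
                          + (- betal * al etan tau * (Tl etan tau)\<^sup>2
                               + 2 * kl * Tl etan tau * pdx Tl etan tau / Jl etan tau))"
  shows "(\<forall>tau\<in>{0..tf}.
            (E has_real_derivative (C0 * av delta tau - C1 * ud tau + BO tau - D tau)) (at tau))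
       \<and> (\<forall>tau\<in>{0..tf}. av delta tau < 0 \<and> 0 \<le> ud tau \<longrightarrow> C0 * av delta tau - C1 * ud tau \<le> 0)
       \<and> (\<forall>t\<in>{0..tf}. E t \<le> E 0 + C0 * integral {0..t} uv - (C0 + C1) * (xdelta t - xdelta 0)
                                + integral {0..t} BO)"
  proof -
  have x1v: "C1_plane xv" and x1l: "C1_plane xl" and T1v: "C1_plane Tv" and T1l: "C1_plane Tl"
    and xxv: "C1_plane (pdx xv)" and xxl: "C1_plane (pdx xl)" and xtv: "C1_plane (pdt xv)" and xtl: "C1_plane (pdt xl)"
    and Txv: "C1_plane (pdx Tv)" and Txl: "C1_plane (pdx Tl)"
    using smooth unfolding C2_plane_def by auto
  have xl_t: "pdt xl delta tau = ud tau" for tau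
  proof -
    have "(\<lambda>s. xl delta s) = (\<lambda>s. xv delta s)" using interface_pos(2) by auto
    then show ?thesis unfolding ud_def pdt_def by simp
  qed
  have P1: "(E has_real_derivative (C0 * av delta tau - C1 * ud tau + BO tau - D tau)) (at tau)"
    if tau: "tau \<in> {0..tf}" for tau
  proof -
    have dv: "((\<lambda>\<tau>. betav * integral {xi0..delta} (\<lambda>\<xi>. (Tv \<xi> \<tau>)\<^sup>2 * pdx xv \<xi> \<tau>)) has_real_derivative
     ((- betav * (uv tau - pdt xv delta tau) * (Tv delta tau)\<^sup>2 + 2 * kv * Tv delta tau * (pdx Tv delta tau / pdx xv delta tau))
      - (- betav * (uv tau - pdt xv xi0 tau) * (Tv xi0 tau)\<^sup>2 + 2 * kv * Tv xi0 tau * (pdx Tv xi0 tau / pdx xv xi0 tau))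
      - 2 * kv * integral {xi0..delta} (\<lambda>\<xi>. (pdx Tv \<xi> tau)\<^sup>2 / pdx xv \<xi> tau))) (at tau)"
      apply (rule one_phase[OF smooth(1) smooth(3)])
      using dom(1) apply simp
      using Jpos(1) tau unfolding J_def apply simp
      using pde_v tau unfolding J_def a_def by simp
    have dl: "((\<lambda>\<tau>. betal * integral {delta..etan} (\<lambda>\<xi>. (Tl \<xi> \<tau>)\<^sup>2 * pdx xl \<xi> \<tau>)) has_real_derivative
     ((- betal * (ul tau - pdt xl etan tau) * (Tl etan tau)\<^sup>2 + 2 * kl * Tl etan tau * (pdx Tl etan tau / pdx xl etan tau))
      - (- betal * (ul tau - pdt xl delta tau) * (Tl delta tau)\<^sup>2 + 2 * kl * Tl delta tau * (pdx Tl delta tau / pdx xl delta tau))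
      - 2 * kl * integral {delta..etan} (\<lambda>\<xi>. (pdx Tl \<xi> tau)\<^sup>2 / pdx xl \<xi> tau))) (at tau)"
      apply (rule one_phase[OF smooth(2) smooth(4)])
      using dom(2) apply simp
      using Jpos(2) tau unfolding J_def apply simp
      using pde_l tau unfolding J_def a_def by simp
    have TT: "Tv delta tau = Tdelta" "Tl delta tau = Tdelta" using interface_T tau by auto
    have st: "rhov * hlv * ud tau = kl * (pdx Tl delta tau / pdx xl delta tau) - kv * (pdx Tv delta tau / pdx xv delta tau)"
      using stefan tau unfolding J_def by simp
    have ms: "ul tau = gamma * uv tau + (1 - gamma) * ud tau" using mass tau by simp
    have eq: "((- betav * (uv tau - pdt xv delta tau) * (Tv delta tau)\<^sup>2 + 2 * kv * Tv delta tau * (pdx Tv delta tau / pdx xv delta tau))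
      - (- betav * (uv tau - pdt xv xi0 tau) * (Tv xi0 tau)\<^sup>2 + 2 * kv * Tv xi0 tau * (pdx Tv xi0 tau / pdx xv xi0 tau))
      - 2 * kv * integral {xi0..delta} (\<lambda>\<xi>. (pdx Tv \<xi> tau)\<^sup>2 / pdx xv \<xi> tau))
      + ((- betal * (ul tau - pdt xl etan tau) * (Tl etan tau)\<^sup>2 + 2 * kl * Tl etan tau * (pdx Tl etan tau / pdx xl etan tau))
      - (- betal * (ul tau - pdt xl delta tau) * (Tl delta tau)\<^sup>2 + 2 * kl * Tl delta tau * (pdx Tl delta tau / pdx xl delta tau))
      - 2 * kl * integral {delta..etan} (\<lambda>\<xi>. (pdx Tl \<xi> tau)\<^sup>2 / pdx xl \<xi> tau))
      = C0 * av delta tau - C1 * ud tau + BO tau - D tau"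
      unfolding TT xl_t ud_def[symmetric]
      unfolding C_def a_def BO_def D_def J_def ud_def[symmetric]
      using alg[OF ms st, of betav Tdelta _ _ _ betal] by (simp add: mult.assoc)
    show ?thesis
      unfolding E_def J_def using DERIV_add[OF dv dl] unfolding eq .
  qed
  have C0pos: "0 < C0"
  proof -
    have "C0 = rhov * (Cpl - Cpv) * Tdelta ^ 2"
      unfolding C_def beta_def gamma_def using pos by (simp add: field_simps)
    then show ?thesis using pos Cp by simp
  qed
  have C1pos: "0 < C1" unfolding C_def using pos by simp
  have P2: "C0 * av delta tau - C1 * ud tau \<le> 0" if "av delta tau < 0" "0 \<le> ud tau" for tau
  proof -
    have "C0 * av delta tau < 0" using C0pos that by (simp add: mult_pos_neg)
    moreover have "0 \<le> C1 * ud tau" using C1pos that by simp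
    ultimately show ?thesis by simp
  qed
  have avd: "av delta tau = uv tau - ud tau" for tau unfolding a_def ud_def by simp
  have Dnn: "0 \<le> D tau" if "tau \<in> {0..tf}" for tau
  proof -
    have "0 \<le> integral {xi0..delta} (\<lambda>xi. (pdx Tv xi tau)\<^sup>2 / Jv xi tau)"
      by (rule int_nonneg') (use Jpos(1) that in \<open>auto intro!: divide_nonneg_pos\<close>)
    moreover have "0 \<le> integral {delta..etan} (\<lambda>eta. (pdx Tl eta tau)\<^sup>2 / Jl eta tau)"
      by (rule int_nonneg') (use Jpos(2) that in \<open>auto intro!: divide_nonneg_pos\<close>)
    ultimately show ?thesis unfolding D_def using pos by simp
  qed
  have P3: "E t \<le> E 0 + C0 * integral {0..t} uv - (C0 + C1) * (xdelta t - xdelta 0) + integral {0..t} BO"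
    if t: "t \<in> {0..tf}" for t
  proof -
    have t0: "0 \<le> t" "t \<le> tf" using t by auto
    have ucont: "continuous_on {0..t} uv" using smooth(5) continuous_on_subset by blast
    have ulcont: "continuous_on {0..t} ul"
    proof -
      have "continuous_on {0..t} (\<lambda>tau. gamma * uv tau + (1 - gamma) * pdt xv delta tau)"
        by (intro continuous_intros ucont C1_cont_t[OF x1v])
      then show ?thesis
        by (rule continuous_on_cong[THEN iffD1, rotated 2]) (use mass t0 in \<open>auto simp: ud_def\<close>)
    qed
    have Jv0: "pdx xv xi0 tau \<noteq> 0" if "tau \<in> {0..t}" for tau
      using Jpos(1)[rule_format, of xi0 tau] that t0 dom(1) unfolding J_def by auto
    have Jl0: "pdx xl etan tau \<noteq> 0" if "tau \<in> {0..t}" for tau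
      using Jpos(2)[rule_format, of etan tau] that t0 dom(2) unfolding J_def by auto
    have BOcont: "continuous_on {0..t} BO"
      unfolding BO_def a_def J_def
      by (intro continuous_intros ucont ulcont C1_cont[OF T1v] C1_cont[OF T1l] C1_cont_t[OF x1v] C1_cont_t[OF x1l]
            C1_cont_x[OF T1v] C1_cont_x[OF T1l] C1_cont_x[OF x1v] C1_cont_x[OF x1l]) (auto dest: Jv0 Jl0)
    define F where "F = (\<lambda>tau. E tau - C0 * integral {0..tau} uv + (C0 + C1) * xdelta tau - integral {0..tau} BO)"
    have Fd: "(F has_real_derivative - D tau) (at tau within {0..t})" if tau: "tau \<in> {0..t}" for tau
    proof -
      have tt: "tau \<in> {0..tf}" using tau t0 by auto
      have d1: "(E has_real_derivative (C0 * av delta tau - C1 * ud tau + BO tau - D tau)) (at tau within {0..t})"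
        using P1[OF tt] by (rule has_field_derivative_at_within)
      have d2: "((\<lambda>x. integral {0..x} uv) has_real_derivative uv tau) (at tau within {0..t})"
        by (rule integral_has_real_derivative[OF ucont tau])
      have d3: "(xdelta has_real_derivative ud tau) (at tau within {0..t})"
        unfolding interface_pos(1) ud_def by (rule has_field_derivative_at_within, rule C1_dt[OF x1v])
      have d4: "((\<lambda>x. integral {0..x} BO) has_real_derivative BO tau) (at tau within {0..t})"
        by (rule integral_has_real_derivative[OF BOcont tau])
      have "(F has_real_derivative (C0 * av delta tau - C1 * ud tau + BO tau - D tau) - C0 * uv tau + (C0 + C1) * ud tau - BO tau) (at tau within {0..t})"
        unfolding F_def by (intro DERIV_diff DERIV_add DERIV_cmult d1 d2 d3 d4)
      moreover have "(C0 * av delta tau - C1 * ud tau + BO tau - D tau) - C0 * uv tau + (C0 + C1) * ud tau - BO tau = - D tau"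
        unfolding avd by (simp add: algebra_simps)
      ultimately show ?thesis by simp
    qed
    have "F t \<le> F 0"
    proof (rule DERIV_nonpos_imp_decreasing_open[OF t0(1)])
      fix x assume x: "0 < x" "x < t"
      have "(F has_real_derivative - D x) (at x)"
        using Fd[of x] x at_within_Icc_at[of 0 x t] by simp
      moreover have "- D x \<le> 0" using Dnn[of x] x t0 by simp
      ultimately show "\<exists>y. (F has_real_derivative y) (at x) \<and> y \<le> 0" by blast
    next
      show "continuous_on {0..t} F"
        unfolding continuous_on_eq_continuous_within using Fd DERIV_continuous by blast
    qed
    then show ?thesis unfolding F_def by (simp add: algebra_simps)
  qed
  show ?thesis using P1 P2 P3 by blast
qed

end
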